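(* For any $(n,t_e,\lambda)$-full-access setting satisfying $2n-t_e\le 2^{\lambda}$, there is a P-PMT family (obtained by repeating a one-round polynomial ramp-secret-sharing-based protocol $q$ times, $q\in\mathbb N$ arbitrary) with P-secrecy rate $1-\frac{t_e}{n}$.
   Context: Multipath setting: an $(n,t_a,t_b,t_e,\lambda)$-multipath setting ($0\le t_a,t_b,t_e\le n$) has a sender Alice, a receiver Bob and a passive, computationally unbounded eavesdropper Eve, connected by $n$ disjoint paths; Alice and Bob share no key. At any time Alice, Bob and Eve access at most $t_a,t_b,t_e$ paths respectively. Time is divided into intervals, each corresponding to sending $\lambda$ consecutive bits over a path; at the start of each interval every party (Eve included, adaptively) chooses its accessed paths and keeps them for the whole interval. Anything sent over a path is seen by all parties accessing that path in that interval; Eve's view is everything sent over her accessed paths. The case $t_a=t_b=n$ is called the $(n,t_e,\lambda)$-full-access setting. PMT protocol: a $(k,c,\delta,\epsilon)$-PMT protocol transmits any $S\in\{0,1\}^k$ from Alice to Bob with $c$ communicated bits, Bob outputting $\hat S$, with $\Pr(\hat S\neq s)\le\delta$ for all $s$ and $SD(View_E(s_1),View_E(s_2))\le\epsilon$ for all $s_1,s_2$ ($View_E(s)$ Eve's view when $s$ is sent, any Eve strategy; $SD(X,Y)=\frac12\sum_x|\Pr(X=x)-\Pr(Y=x)|$). P-PMT family: a sequence $(\Pi_i)_{i\in\mathbb N}$ of $(k_i,c_i,0,0)$-PMT protocols with $k_{i+1}>k_i$; its P-secrecy rate is $\inf_i k_i/c_i$. *)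

theory Defs
  imports "HOL-Probability.Probability"
begin

(* A block of lambda bits is a bool list of length lambda; a secret in {0,1}^k is
   a bool list of length k.  A transcript X assigns to interval j and path i the
   block X j i sent by Alice over path i during interval j. *)
type_synonym transcript = "nat \<Rightarrow> nat \<Rightarrow> bool list"

(* Eve's observation in one interval: for each path, Some block if accessed, None otherwise *)
type_synonym eve_obs = "nat \<Rightarrow> bool list option"

(* An (adaptive, deterministic) Eve strategy: the set of paths she accesses in the
   next interval as a function of everything she has seen so far. *)
type_synonym eve_strategy = "eve_obs list \<Rightarrow> nat set"

definition valid_eve :: "nat \<Rightarrow> nat \<Rightarrow> eve_strategy \<Rightarrow> bool" where
  "valid_eve n te E \<longleftrightarrow> (\<forall>v. E v \<subseteq> {..<n} \<and> card (E v) \<le> te)"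

fun eve_view :: "nat \<Rightarrow> eve_strategy \<Rightarrow> nat \<Rightarrow> transcript \<Rightarrow> eve_obs list" where
  "eve_view n E 0 X = []"
| "eve_view n E (Suc j) X =
     (let v = eve_view n E j X; S = E v
      in v @ [(\<lambda>i. if i \<in> S \<and> i < n then Some (X j i) else None)])"

(* A (one-way) protocol in the full-access setting: it uses `rounds` intervals,
   Alice's randomized encoder maps the secret to a transcript, Bob (who sees all
   paths) decodes. *)
record protocol =
  rounds :: nat
  enc :: "bool list \<Rightarrow> transcript pmf"
  dec :: "transcript \<Rightarrow> bool list"

definition stat_dist :: "'a pmf \<Rightarrow> 'a pmf \<Rightarrow> real" where
  "stat_dist p q = (1/2) * infsum (\<lambda>x. \<bar>pmf p x - pmf q x\<bar>) UNIV"

definition comm_bits :: "nat \<Rightarrow> nat \<Rightarrow> protocol \<Rightarrow> nat" where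
  "comm_bits n lam P = rounds P * n * lam"

definition well_formed :: "nat \<Rightarrow> nat \<Rightarrow> nat \<Rightarrow> protocol \<Rightarrow> bool" where
  "well_formed n lam k P \<longleftrightarrow>
     (\<forall>s. length s = k \<longrightarrow> (\<forall>X \<in> set_pmf (enc P s). \<forall>j i.
        (j < rounds P \<and> i < n \<longrightarrow> length (X j i) = lam) \<and>
        (\<not> (j < rounds P \<and> i < n) \<longrightarrow> X j i = [])))"

definition is_PMT :: "nat \<Rightarrow> nat \<Rightarrow> nat \<Rightarrow> protocol \<Rightarrow> nat \<Rightarrow> nat \<Rightarrow> real \<Rightarrow> real \<Rightarrow> bool" where
  "is_PMT n te lam P k c \<delta> \<epsilon> \<longleftrightarrow>
     well_formed n lam k P \<and> comm_bits n lam P = c \<and>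
     (\<forall>s. length s = k \<longrightarrow>
        measure_pmf.prob (map_pmf (dec P) (enc P s)) {s'. s' \<noteq> s} \<le> \<delta>) \<and>
     (\<forall>s1 s2 E. length s1 = k \<longrightarrow> length s2 = k \<longrightarrow> valid_eve n te E \<longrightarrow>
        stat_dist (map_pmf (eve_view n E (rounds P)) (enc P s1))
                  (map_pmf (eve_view n E (rounds P)) (enc P s2)) \<le> \<epsilon>)"

definition is_PPMT_family ::
    "nat \<Rightarrow> nat \<Rightarrow> nat \<Rightarrow> (nat \<Rightarrow> protocol) \<Rightarrow> (nat \<Rightarrow> nat) \<Rightarrow> (nat \<Rightarrow> nat) \<Rightarrow> bool" where
  "is_PPMT_family n te lam Pr k c \<longleftrightarrow>
     (\<forall>i. is_PMT n te lam (Pr i) (k i) (c i) 0 0) \<and> (\<forall>i. k (Suc i) > k i)"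

definition P_secrecy_rate :: "(nat \<Rightarrow> nat) \<Rightarrow> (nat \<Rightarrow> nat) \<Rightarrow> real" where
  "P_secrecy_rate k c = (INF i. real (k i) / real (c i))"

end

theory Submission
  imports Defs "HOL-Algebra.Algebraic_Closure_Type" "HOL-Library.Z2"
begin

type_synonym L = "bit alg_closure"

lemma two_L: "(2::L) = 0" by (metis bit_2_eq_0 to_ac_0 to_ac_numeral)

lemma frob2: "((x::L) + y) ^ 2 = x ^ 2 + y ^ 2"
proof -
  have "(x + y) ^ 2 = x^2 + 2*x*y + y^2" by (simp add: power2_eq_square algebra_simps)
  thus ?thesis by (simp add: two_L)
qed

lemma frob: "((x::L) + y) ^ (2^m) = x ^ (2^m) + y ^ (2^m)"
proof (induction m)
  case 0 then show ?case by simp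
next
  case (Suc m)
  have "(x + y) ^ (2^Suc m) = ((x+y)^(2^m))^2" by (simp add: power_mult[symmetric] mult.commute)
  also have "\<dots> = (x ^ (2^m))^2 + (y ^ (2^m))^2" using Suc by (simp add: frob2)
  also have "\<dots> = x ^ (2^Suc m) + y ^ (2^Suc m)" by (simp add: power_mult[symmetric] mult.commute)
  finally show ?case .
qed

definition FF :: "nat \<Rightarrow> L set" where "FF lam = {x. x ^ (2^lam) = x}"

lemma FF_0[simp]: "0 \<in> FF lam" by (simp add: FF_def)
lemma FF_add: "x \<in> FF lam \<Longrightarrow> y \<in> FF lam \<Longrightarrow> x + y \<in> FF lam"
  by (simp add: FF_def frob)
lemma FF_mult: "x \<in> FF lam \<Longrightarrow> y \<in> FF lam \<Longrightarrow> x * y \<in> FF lam"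
  by (simp add: FF_def power_mult_distrib)
lemma FF_pow: "x \<in> FF lam \<Longrightarrow> x ^ a \<in> FF lam"
  by (simp add: FF_def flip: power_mult) (metis mult.commute power_mult)
lemma FF_sum: "(\<And>i. i \<in> A \<Longrightarrow> f i \<in> FF lam) \<Longrightarrow> sum f A \<in> FF lam"
  by (induction A rule: infinite_finite_induct) (auto intro: FF_add)

lemma card_FF:
  assumes "lam \<ge> 1"
  shows "card (FF lam) = 2 ^ lam"
proof -
  define q :: nat where "q = 2 ^ lam"
  have q2: "q \<ge> 2" using assms power_increasing[of 1 lam "2::nat"] unfolding q_def by simp
  define p :: "L poly" where "p = Polynomial.monom 1 q - Polynomial.monom 1 1"
  have deg: "Polynomial.degree p = q" unfolding p_def diff_conv_add_uminus using q2
    by (subst degree_add_eq_left) (auto simp: degree_monom_eq)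
  have lc: "Polynomial.lead_coeff p = 1" using deg q2 by (simp add: p_def Polynomial.coeff_monom)
  have p0: "p \<noteq> 0" using deg q2 by auto
  have roots: "{x. poly p x = 0} = FF lam"
    by (auto simp: p_def FF_def poly_monom q_def)
  have ofq: "(of_nat q :: L) = 0"
  proof -
    obtain l where "lam = Suc l" using assms by (cases lam) auto
    thus ?thesis by (simp add: q_def two_L)
  qed
  have dp: "pderiv p = - 1" unfolding p_def
    by (simp add: pderiv_diff pderiv_monom ofq)
  obtain A where A: "size A = Polynomial.degree p" "p = Polynomial.smult (Polynomial.lead_coeff p) (\<Prod>x\<in>#A. [:-x, 1:])"
    using alg_closed_imp_factorization[OF p0] by blast
  have pA: "p = (\<Prod>x\<in>#A. [:-x, 1:])" using A(2) lc by simp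
  have cnt: "count A x \<le> 1" for x
  proof (rule ccontr)
    assume "\<not> count A x \<le> 1"
    hence "add_mset x (add_mset x {#}) \<subseteq># A"
      by (simp add: subseteq_mset_def)
    then obtain B where B: "A = add_mset x (add_mset x B)"
      by (metis add_mset_add_single mset_subset_eq_exists_conv union_mset_add_mset_left add.commute)
    define h :: "L poly" where "h = [:-x, 1:]"
    define g where "g = (\<Prod>y\<in>#B. [:-y, 1:])"
    have "p = h * (h * g)" using pA B by (simp add: h_def g_def)
    hence "pderiv p = pderiv h * (h * g) + h * pderiv (h * g)"
      by (simp add: pderiv_mult)
    hence "poly (pderiv p) x = 0" by (simp add: h_def)
    thus False using dp by simp
  qed
  have "A = mset_set (set_mset A)"
  proof (rule multiset_eqI)
    fix x show "count A x = count (mset_set (set_mset A)) x"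
    proof (cases "x \<in># A")
      case True
      then have "count A x \<ge> 1" by (simp add: Suc_le_eq)
      then have "count A x = 1" using cnt[of x] by linarith
      then show ?thesis using True by simp
    next
      case False
      then show ?thesis by (simp add: not_in_iff)
    qed
  qed
  hence "size A = card (set_mset A)" by (metis size_mset_set)
  moreover have "set_mset A = {x. poly p x = 0}"
    by (subst pA) (auto simp: poly_prod_mset prod_mset_zero_iff)
  ultimately show ?thesis using A(1) deg roots q_def by simp
qed

lemma vander_zero:
  fixes d :: "nat \<Rightarrow> L"
  assumes "finite A" "card A = m" "\<And>x. x \<in> A \<Longrightarrow> (\<Sum>a<m. d a * x ^ a) = 0"
  shows "\<And>a. a < m \<Longrightarrow> d a = 0"
proof -
  define p where "p = (\<Sum>a<m. Polynomial.monom (d a) a)"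
  have pv: "poly p x = (\<Sum>a<m. d a * x ^ a)" for x
    by (simp add: p_def poly_sum poly_monom)
  have cf: "poly.coeff p b = (if b < m then d b else 0)" for b
    by (simp add: p_def coeff_sum Polynomial.coeff_monom)
  have "p = 0"
  proof (rule ccontr)
    assume p0: "p \<noteq> 0"
    then have "m > 0" by (cases m) (auto simp: p_def)
    have "Polynomial.degree p \<le> m - 1"
      by (rule degree_le) (auto simp: cf)
    moreover have "A \<subseteq> {x. poly p x = 0}" using assms(3) pv by auto
    then have "card A \<le> card {x. poly p x = 0}"
      using poly_roots_finite[OF p0] by (rule card_mono[rotated])
    ultimately show False using card_poly_roots_bound[OF p0] assms(2) \<open>m > 0\<close> by linarith
  qed
  then show "\<And>a. a < m \<Longrightarrow> d a = 0" using cf by (metis coeff_0)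
qed

definition blk :: "nat \<Rightarrow> bool list \<Rightarrow> nat \<Rightarrow> bool list" where
  "blk l s b = take l (drop (b * l) s)"

lemma concat_blk: "length s = m * l \<Longrightarrow> concat (map (blk l s) [0..<m]) = s"
proof (induction m arbitrary: s)
  case 0 then show ?case by simp
next
  case (Suc m)
  have "blk l (take (m * l) s) b = blk l s b" if "b < m" for b
  proof -
    have "(Suc b) * l \<le> m * l" using that by (intro mult_le_mono1) simp
    then have "b * l + l \<le> m * l" by simp
    then show ?thesis unfolding blk_def by (simp add: take_drop min_def)
  qed
  then have "concat (map (blk l s) [0..<m]) = concat (map (blk l (take (m*l) s)) [0..<m])"
    by (intro arg_cong[where f=concat] map_cong) auto
  also have "\<dots> = take (m*l) s" using Suc by simp
  finally have c: "concat (map (blk l s) [0..<m]) = take (m*l) s" .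
  have e: "blk l s m = drop (m*l) s" using Suc.prems unfolding blk_def by simp
  show ?case using c e by simp
qed

lemma extend_set:
  assumes "finite U" "T \<subseteq> U" "card T \<le> m" "m \<le> card U"
  obtains T' where "T \<subseteq> T'" "T' \<subseteq> U" "card T' = m"
proof -
  have fT: "finite T" using assms finite_subset by blast
  have "m - card T \<le> card (U - T)" using assms fT by (simp add: card_Diff_subset)
  then obtain D where D: "D \<subseteq> U - T" "card D = m - card T" "finite D"
    by (rule obtain_subset_with_card_n)
  have "card (T \<union> D) = m" using D fT assms(3) by (subst card_Un_disjoint) auto
  then show ?thesis using that[of "T \<union> D"] D assms by auto
qed

context
  fixes phi :: "L \<Rightarrow> bool list" and alpha :: "nat \<Rightarrow> L" and lam n te :: nat
begin

definition sv :: "bool list \<Rightarrow> nat \<Rightarrow> L" where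
  "sv \<sigma> b = (if length (blk lam \<sigma> b) = lam then inv_into (FF lam) phi (blk lam \<sigma> b) else 0)"

definition coef :: "bool list \<Rightarrow> (nat \<Rightarrow> L) \<Rightarrow> nat \<Rightarrow> L" where
  "coef \<sigma> r a = (if a < te then r a else sv \<sigma> (a - te))"

definition vals :: "bool list \<Rightarrow> (nat \<Rightarrow> L) \<Rightarrow> nat \<Rightarrow> L" where
  "vals \<sigma> r i = (\<Sum>a<n. coef \<sigma> r a * alpha i ^ a)"

definition shares :: "bool list \<Rightarrow> (nat \<Rightarrow> L) \<Rightarrow> nat \<Rightarrow> bool list" where
  "shares \<sigma> r i = (if i < n then phi (vals \<sigma> r i) else [])"

definition RS :: "(nat \<Rightarrow> L) set" where "RS = PiE {..<te} (\<lambda>_. FF lam)"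

definition rnd :: "bool list \<Rightarrow> (nat \<Rightarrow> bool list) pmf" where
  "rnd \<sigma> = map_pmf (shares \<sigma>) (pmf_of_set RS)"

definition GG :: "(nat \<Rightarrow> L) \<Rightarrow> nat \<Rightarrow> L" where
  "GG c = restrict (\<lambda>i. \<Sum>a<n. c a * alpha i ^ a) {..<n}"

definition dec_round :: "(nat \<Rightarrow> bool list) \<Rightarrow> bool list" where
  "dec_round Y = (let c = inv_into (PiE {..<n} (\<lambda>_. UNIV)) GG
        (restrict (\<lambda>i. inv_into (FF lam) phi (Y i)) {..<n})
     in concat (map (\<lambda>b. phi (c (te + b))) [0..<n - te]))"

primrec gen :: "nat \<Rightarrow> bool list \<Rightarrow> transcript pmf" where
  "gen 0 s = return_pmf (\<lambda>_ _. [])"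
| "gen (Suc j) s = bind_pmf (gen j s)
     (\<lambda>W. map_pmf (\<lambda>Y. W(j := Y)) (rnd (blk ((n - te) * lam) s j)))"

definition proto :: "nat \<Rightarrow> protocol" where
  "proto m = \<lparr>rounds = m, enc = gen m,
     dec = (\<lambda>W. concat (map (\<lambda>j. dec_round (W j)) [0..<m]))\<rparr>"

end

locale pmt =
  fixes phi :: "L \<Rightarrow> bool list" and alpha :: "nat \<Rightarrow> L" and lam n te :: nat
  assumes lam: "lam \<ge> 1" and ten: "te < n"
    and phi: "bij_betw phi (FF lam) {xs. length xs = lam}"
    and alpha: "alpha ` {..<n} \<subseteq> FF lam" "inj_on alpha {..<n}"
begin

lemma finFF: "finite (FF lam)"
  using card_FF[OF lam] by (metis card.infinite nat.simps(3) numeral_eq_Suc power_not_zero zero_neq_numeral)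

lemma RS_ne: "RS lam te \<noteq> {}" "finite (RS lam te)"
proof -
  have "FF lam \<noteq> {}" using FF_0 by blast
  then show "RS lam te \<noteq> {}" "finite (RS lam te)"
    unfolding RS_def using finFF by (auto simp: PiE_eq_empty_iff finite_PiE)
qed

lemma sv_FF: "sv phi lam \<sigma> b \<in> FF lam"
proof -
  have "length (blk lam \<sigma> b) = lam \<Longrightarrow> blk lam \<sigma> b \<in> phi ` FF lam"
    using phi by (auto simp: bij_betw_def)
  then show ?thesis unfolding sv_def by (auto intro: inv_into_into)
qed

lemma sv_blk: "length (blk lam \<sigma> b) = lam \<Longrightarrow> phi (sv phi lam \<sigma> b) = blk lam \<sigma> b"
  using phi unfolding sv_def bij_betw_def by (auto intro!: f_inv_into_f)

lemma coef_FF: "r \<in> RS lam te \<Longrightarrow> coef phi lam te \<sigma> r a \<in> FF lam"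
  unfolding coef_def RS_def using sv_FF by auto

lemma vals_FF: "r \<in> RS lam te \<Longrightarrow> i < n \<Longrightarrow> vals phi alpha lam n te \<sigma> r i \<in> FF lam"
  unfolding vals_def using coef_FF alpha
  by (auto intro!: FF_sum FF_mult FF_pow)

lemma len_phi: "x \<in> FF lam \<Longrightarrow> length (phi x) = lam"
  using phi by (auto simp: bij_betw_def)

lemma set_rnd: "set_pmf (rnd phi alpha lam n te \<sigma>) = shares phi alpha lam n te \<sigma> ` RS lam te"
  unfolding rnd_def using RS_ne by simp

lemma card_alpha: "T \<subseteq> {..<n} \<Longrightarrow> card (alpha ` T) = card T"
  using alpha(2) by (meson card_image inj_on_subset)

end


lemma blk_len: "length \<sigma> = m * l \<Longrightarrow> b < m \<Longrightarrow> length (blk l \<sigma> b) = l"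
proof -
  assume a: "length \<sigma> = m * l" "b < m"
  have "(Suc b) * l \<le> m * l" using a by (intro mult_le_mono1) simp
  then show ?thesis using a unfolding blk_def by simp
qed

lemma view_upd: "j \<le> j' \<Longrightarrow> eve_view n E j (Z(j' := Y)) = eve_view n E j Z"
  by (induction j) (auto simp: Let_def)

context pmt
begin

abbreviation "GEN \<equiv> gen phi alpha lam n te"
abbreviation "RND \<equiv> rnd phi alpha lam n te"
abbreviation "VALS \<equiv> vals phi alpha lam n te"
abbreviation "SH \<equiv> shares phi alpha lam n te"
abbreviation "K \<equiv> (n - te) * lam"

definition obs :: "nat set \<Rightarrow> (nat \<Rightarrow> bool list) \<Rightarrow> nat \<Rightarrow> bool list option" where
  "obs T Y = (\<lambda>i. if i \<in> T \<and> i < n then Some (Y i) else None)"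

lemma vals_diff:
  assumes "r \<in> RS lam te" "r' \<in> RS lam te"
  shows "VALS \<sigma> r i - VALS \<sigma> r' i = (\<Sum>a<te. (r a - r' a) * alpha i ^ a)"
proof -
  have "VALS \<sigma> r i - VALS \<sigma> r' i
      = (\<Sum>a<n. (coef phi lam te \<sigma> r a - coef phi lam te \<sigma> r' a) * alpha i ^ a)"
    unfolding vals_def by (simp add: sum_subtractf left_diff_distrib)
  also have "\<dots> = (\<Sum>a<te. (coef phi lam te \<sigma> r a - coef phi lam te \<sigma> r' a) * alpha i ^ a)"
    using ten by (intro sum.mono_neutral_right) (auto simp: coef_def)
  also have "\<dots> = (\<Sum>a<te. (r a - r' a) * alpha i ^ a)"
    by (intro sum.cong) (auto simp: coef_def)
  finally show ?thesis .
qed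

lemma restrict_inj:
  assumes T: "T' \<subseteq> {..<n}" "card T' = te"
  shows "inj_on (\<lambda>r. restrict (VALS \<sigma> r) T') (RS lam te)"
proof (rule inj_onI)
  fix r r' assume r: "r \<in> RS lam te" "r' \<in> RS lam te"
    and eq: "restrict (VALS \<sigma> r) T' = restrict (VALS \<sigma> r') T'"
  have "\<And>x. x \<in> alpha ` T' \<Longrightarrow> (\<Sum>a<te. (r a - r' a) * x ^ a) = 0"
  proof -
    fix x assume "x \<in> alpha ` T'"
    then obtain i where i: "i \<in> T'" "x = alpha i" by auto
    have "VALS \<sigma> r i = VALS \<sigma> r' i" using eq i(1) by (metis restrict_apply')
    then show "(\<Sum>a<te. (r a - r' a) * x ^ a) = 0" using vals_diff[OF r, of \<sigma> i] i by simp
  qed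
  moreover have "finite (alpha ` T')" using T finite_subset by blast
  moreover have "card (alpha ` T') = te" using card_alpha[OF T(1)] T(2) by simp
  ultimately have "\<And>a. a < te \<Longrightarrow> r a - r' a = 0"
    using vander_zero[of "alpha ` T'" te "\<lambda>a. r a - r' a"] by blast
  then show "r = r'" using r unfolding RS_def by (intro PiE_ext[OF r[unfolded RS_def]]) auto
qed

lemma restrict_img:
  assumes T: "T' \<subseteq> {..<n}" "card T' = te"
  shows "(\<lambda>r. restrict (VALS \<sigma> r) T') ` (RS lam te) = PiE T' (\<lambda>_. FF lam)"
proof (rule card_subset_eq)
  have fT: "finite T'" using T finite_subset by blast
  show "finite (PiE T' (\<lambda>_. FF lam))" using fT finFF by (simp add: finite_PiE)
  show "(\<lambda>r. restrict (VALS \<sigma> r) T') ` (RS lam te) \<subseteq> PiE T' (\<lambda>_. FF lam)"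
    using vals_FF T by auto
  have "card ((\<lambda>r. restrict (VALS \<sigma> r) T') ` (RS lam te)) = card (RS lam te)"
    by (rule card_image[OF restrict_inj[OF T]])
  also have "\<dots> = card (FF lam) ^ te" unfolding RS_def by (simp add: card_PiE)
  also have "\<dots> = card (PiE T' (\<lambda>_. FF lam))" using fT T by (simp add: card_PiE)
  finally show "card ((\<lambda>r. restrict (VALS \<sigma> r) T') ` (RS lam te)) = card (PiE T' (\<lambda>_. FF lam))" .
qed

lemma obs_eq:
  assumes T: "T' \<subseteq> {..<n}" "card T' = te"
  shows "map_pmf (obs T') (RND \<sigma>) =
    map_pmf (\<lambda>w i. if i \<in> T' then Some (phi (w i)) else None) (pmf_of_set (PiE T' (\<lambda>_. FF lam)))"
proof -
  let ?H = "\<lambda>w i. if i \<in> T' then Some (phi (w i)) else None"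
  have eqf: "(\<lambda>x. obs T' (SH \<sigma> x)) = (\<lambda>x. ?H (restrict (VALS \<sigma> x) T'))"
    using T by (auto simp: obs_def shares_def fun_eq_iff)
  have "map_pmf (obs T') (RND \<sigma>) = map_pmf (\<lambda>x. obs T' (SH \<sigma> x)) (pmf_of_set (RS lam te))"
    unfolding rnd_def by (simp add: map_pmf_comp)
  also have "\<dots> = map_pmf (\<lambda>x. ?H (restrict (VALS \<sigma> x) T')) (pmf_of_set (RS lam te))"
    by (simp only: eqf)
  also have "\<dots> = map_pmf ?H (map_pmf (\<lambda>r. restrict (VALS \<sigma> r) T') (pmf_of_set (RS lam te)))"
    by (simp add: map_pmf_comp)
  also have "map_pmf (\<lambda>r. restrict (VALS \<sigma> r) T') (pmf_of_set (RS lam te)) = pmf_of_set (PiE T' (\<lambda>_. FF lam))"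
    using map_pmf_of_set_inj[OF restrict_inj[OF T] RS_ne] restrict_img[OF T] by simp
  finally show ?thesis .
qed

lemma key:
  assumes T: "T \<subseteq> {..<n}" "card T \<le> te"
  shows "map_pmf (obs T) (RND \<sigma>) = map_pmf (obs T) (RND \<sigma>')"
proof -
  obtain T' where T': "T \<subseteq> T'" "T' \<subseteq> {..<n}" "card T' = te"
    using extend_set[of "{..<n}" T te] T ten by auto
  let ?g = "\<lambda>u i. if i \<in> T then u i else None"
  have "obs T = ?g \<circ> obs T'" using T' by (auto simp: obs_def fun_eq_iff)
  then have "map_pmf (obs T) M = map_pmf ?g (map_pmf (obs T') M)" for M
    by (simp add: map_pmf_comp comp_def)
  then show ?thesis using obs_eq[OF T'(2,3)] by simp
qed

lemma secrecy:
  assumes E: "valid_eve n te E"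
  shows "map_pmf (eve_view n E j) (GEN j s) = map_pmf (eve_view n E j) (GEN j s')"
proof (induction j)
  case 0 then show ?case by simp
next
  case (Suc j)
  have ev: "eve_view n E (Suc j) (Z(j := Y)) = eve_view n E j Z @ [obs (E (eve_view n E j Z)) Y]" for Z Y
    by (simp add: Let_def view_upd obs_def fun_eq_iff)
  have step: "map_pmf (eve_view n E (Suc j)) (GEN (Suc j) u) =
     bind_pmf (map_pmf (eve_view n E j) (GEN j u))
       (\<lambda>v. map_pmf (\<lambda>w. v @ [w]) (map_pmf (obs (E v)) (RND (blk K u j))))" for u
  proof -
    have "map_pmf (eve_view n E (Suc j)) (GEN (Suc j) u) =
      bind_pmf (GEN j u) (\<lambda>Z. map_pmf (eve_view n E (Suc j)) (map_pmf (\<lambda>Y. Z(j := Y)) (RND (blk K u j))))"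
      by (simp only: gen.simps map_bind_pmf)
    also have "\<dots> = bind_pmf (GEN j u) (\<lambda>Z. map_pmf (\<lambda>Y. eve_view n E j Z @ [obs (E (eve_view n E j Z)) Y]) (RND (blk K u j)))"
      by (simp only: map_pmf_comp ev)
    also have "\<dots> = bind_pmf (GEN j u) (\<lambda>Z. map_pmf (\<lambda>w. eve_view n E j Z @ [w]) (map_pmf (obs (E (eve_view n E j Z))) (RND (blk K u j))))"
      by (simp only: map_pmf_comp)
    also have "\<dots> = bind_pmf (map_pmf (eve_view n E j) (GEN j u))
       (\<lambda>v. map_pmf (\<lambda>w. v @ [w]) (map_pmf (obs (E v)) (RND (blk K u j))))"
      by (simp only: bind_map_pmf)
    finally show ?thesis .
  qed
  have inner: "map_pmf (obs (E v)) (RND (blk K s j)) = map_pmf (obs (E v)) (RND (blk K s' j))" for v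
    using E unfolding valid_eve_def by (intro key) auto
  show ?case by (simp only: step Suc inner)
qed

lemma supp_gen:
  "Z \<in> set_pmf (GEN j s) \<Longrightarrow> (\<forall>j'<j. Z j' \<in> set_pmf (RND (blk K s j'))) \<and> (\<forall>j'. j \<le> j' \<longrightarrow> Z j' = (\<lambda>_. []))"
proof (induction j arbitrary: Z)
  case 0 then show ?case by simp
next
  case (Suc j)
  have "Z \<in> (\<Union>W\<in>set_pmf (GEN j s). (\<lambda>Y. W(j := Y)) ` set_pmf (RND (blk K s j)))"
    using Suc.prems by (simp only: gen.simps set_bind_pmf set_map_pmf)
  then obtain W Y where WY: "W \<in> set_pmf (GEN j s)" "Y \<in> set_pmf (RND (blk K s j))" "Z = W(j := Y)"
    by blast
  note IH = Suc.IH[OF WY(1)]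
  show ?case
  proof (intro conjI allI impI)
    fix j' assume j': "j' < Suc j"
    show "Z j' \<in> set_pmf (RND (blk K s j'))"
    proof (cases "j' = j")
      case True then show ?thesis using WY by simp
    next
      case False
      then have "j' < j" using j' by simp
      then show ?thesis using IH WY(3) False by simp
    qed
  next
    fix j' assume j': "Suc j \<le> j'"
    then have "Z j' = W j'" using WY(3) by simp
    then show "Z j' = (\<lambda>_. [])" using IH j' by simp
  qed
qed

lemma GG_inj: "inj_on (GG alpha n) (PiE {..<n} (\<lambda>_. UNIV))"
proof (rule inj_onI)
  fix c c' assume c: "c \<in> PiE {..<n} (\<lambda>_. UNIV)" "c' \<in> PiE {..<n} (\<lambda>_. UNIV)"
    and eq: "GG alpha n c = GG alpha n c'"
  have "\<And>x. x \<in> alpha ` {..<n} \<Longrightarrow> (\<Sum>a<n. (c a - c' a) * x ^ a) = 0"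
  proof -
    fix x assume "x \<in> alpha ` {..<n}"
    then obtain i where i: "i < n" "x = alpha i" by auto
    have "GG alpha n c i = GG alpha n c' i" using eq by simp
    then show "(\<Sum>a<n. (c a - c' a) * x ^ a) = 0" using i
      by (simp add: GG_def sum_subtractf left_diff_distrib)
  qed
  moreover have "card (alpha ` {..<n}) = n" using card_alpha[of "{..<n}"] by simp
  ultimately have "\<And>a. a < n \<Longrightarrow> c a - c' a = 0"
    using vander_zero[of "alpha ` {..<n}" n "\<lambda>a. c a - c' a"] by blast
  then show "c = c'" by (intro PiE_ext[OF c]) auto
qed

lemma dec_round_ok:
  assumes len: "length \<sigma> = K" and r: "r \<in> RS lam te"
  shows "dec_round phi alpha lam n te (SH \<sigma> r) = \<sigma>"
proof -
  define c where "c = restrict (coef phi lam te \<sigma> r) {..<n}"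
  have cP: "c \<in> PiE {..<n} (\<lambda>_. UNIV)" by (simp add: c_def)
  have phinj: "inj_on phi (FF lam)" using phi by (simp add: bij_betw_def)
  have "GG alpha n c = restrict (\<lambda>i. inv_into (FF lam) phi (SH \<sigma> r i)) {..<n}"
  proof (rule ext)
    fix i show "GG alpha n c i = restrict (\<lambda>i. inv_into (FF lam) phi (SH \<sigma> r i)) {..<n} i"
    proof (cases "i < n")
      case True
      have "inv_into (FF lam) phi (SH \<sigma> r i) = VALS \<sigma> r i"
        using True vals_FF[OF r True] phinj by (simp add: shares_def inv_into_f_f)
      moreover have "GG alpha n c i = VALS \<sigma> r i"
        using True by (simp add: GG_def vals_def c_def)
      ultimately show ?thesis using True by simp
    qed (simp add: GG_def)
  qed
  then have ic: "inv_into (PiE {..<n} (\<lambda>_. UNIV)) (GG alpha n)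
      (restrict (\<lambda>i. inv_into (FF lam) phi (SH \<sigma> r i)) {..<n}) = c"
    using inv_into_f_f[OF GG_inj cP] by simp
  have M: "map (\<lambda>b. phi (c (te + b))) [0..<n - te] = map (blk lam \<sigma>) [0..<n - te]"
  proof (rule map_cong[OF refl])
    fix b assume "b \<in> set [0..<n - te]"
    then have b: "b < n - te" by simp
    then have "te + b < n" by linarith
    then have "c (te + b) = sv phi lam \<sigma> b" by (simp add: c_def coef_def)
    then show "phi (c (te + b)) = blk lam \<sigma> b" using sv_blk blk_len[OF len b] by simp
  qed
  show ?thesis by (simp only: dec_round_def Let_def ic M concat_blk[OF len])
qed

lemma supp_Z:
  assumes "Z \<in> set_pmf (GEN m s)" "j < m"
  obtains r where "r \<in> RS lam te" "Z j = SH (blk K s j) r"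
  using supp_gen[OF assms(1)] assms(2) set_rnd by blast

lemma wf_Z:
  assumes "Z \<in> set_pmf (GEN m s)"
  shows "(j < m \<and> i < n \<longrightarrow> length (Z j i) = lam) \<and> (\<not> (j < m \<and> i < n) \<longrightarrow> Z j i = [])"
proof (cases "j < m")
  case True
  then obtain r where r: "r \<in> RS lam te" "Z j = SH (blk K s j) r" using supp_Z[OF assms] by blast
  then show ?thesis using True by (cases "i < n") (auto simp: shares_def len_phi vals_FF)
next
  case False
  then show ?thesis using supp_gen[OF assms] by simp
qed

lemma dec_Z:
  assumes len: "length s = m * K" and Z: "Z \<in> set_pmf (GEN m s)"
  shows "concat (map (\<lambda>j. dec_round phi alpha lam n te (Z j)) [0..<m]) = s"
proof -
  have M: "map (\<lambda>j. dec_round phi alpha lam n te (Z j)) [0..<m] = map (blk K s) [0..<m]"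
  proof (rule map_cong[OF refl])
    fix j assume "j \<in> set [0..<m]"
    then have j: "j < m" by simp
    then obtain r where r: "r \<in> RS lam te" "Z j = SH (blk K s j) r" using supp_Z[OF Z] by blast
    show "dec_round phi alpha lam n te (Z j) = blk K s j"
      using r dec_round_ok[OF blk_len[OF len j] r(1)] by simp
  qed
  show ?thesis unfolding M by (rule concat_blk[OF len])
qed

lemma is_PMT_proto:
  shows "is_PMT n te lam (proto phi alpha lam n te m) (m * K) (m * n * lam) 0 0"
  unfolding is_PMT_def
proof (intro conjI allI impI)
  show "well_formed n lam (m * K) (proto phi alpha lam n te m)"
    unfolding well_formed_def proto_def using wf_Z by simp
  show "comm_bits n lam (proto phi alpha lam n te m) = m * n * lam"
    by (simp add: comm_bits_def proto_def)
  fix s :: "bool list" assume len: "length s = m * K"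
  have "measure_pmf.prob (map_pmf (dec (proto phi alpha lam n te m)) (enc (proto phi alpha lam n te m) s)) {s'. s' \<noteq> s} = 0"
    unfolding measure_pmf_zero_iff using dec_Z[OF len] by (auto simp: proto_def)
  then show "measure_pmf.prob (map_pmf (dec (proto phi alpha lam n te m)) (enc (proto phi alpha lam n te m) s)) {s'. s' \<noteq> s} \<le> 0"
    by simp
next
  fix s1 s2 :: "bool list" and E assume E: "valid_eve n te E"
  show "stat_dist (map_pmf (eve_view n E (rounds (proto phi alpha lam n te m))) (enc (proto phi alpha lam n te m) s1))
          (map_pmf (eve_view n E (rounds (proto phi alpha lam n te m))) (enc (proto phi alpha lam n te m) s2)) \<le> 0"
    using secrecy[OF E, of m s1 s2] by (simp add: proto_def stat_dist_def)
qed

end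


theorem proposition1:
  fixes n te lam :: nat
  assumes "1 \<le> n" and "te < n" and "2 * n - te \<le> 2 ^ lam"
  shows "\<exists>Pr k c. is_PPMT_family n te lam Pr k c \<and>
           P_secrecy_rate k c = 1 - real te / real n"
proof -
  have nl: "n < 2 ^ lam" using assms by linarith
  have lam: "lam \<ge> 1"
  proof (rule ccontr)
    assume "\<not> lam \<ge> 1"
    then have "lam = 0" by simp
    then show False using nl assms(1) by simp
  qed
  have cF: "card (FF lam) = 2 ^ lam" by (rule card_FF[OF lam])
  have fF: "finite (FF lam)" using cF by (metis card.infinite nat.simps(3) numeral_eq_Suc power_not_zero zero_neq_numeral)
  have cB: "card {xs :: bool list. length xs = lam} = 2 ^ lam"
    using card_lists_length_eq[of "UNIV :: bool set" lam] by simp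
  have fB: "finite {xs :: bool list. length xs = lam}"
    using finite_lists_length_eq[of "UNIV :: bool set" lam] by simp
  obtain phi where phi: "bij_betw phi (FF lam) {xs :: bool list. length xs = lam}"
    using finite_same_card_bij[OF fF fB] cF cB by auto
  obtain alpha where alpha: "alpha ` {..<n} \<subseteq> FF lam" "inj_on alpha {..<n}"
    using card_le_inj[of "{..<n}" "FF lam"] fF cF nl by auto
  interpret pmt phi alpha lam n te
    using lam assms(2) phi alpha by unfold_locales auto
  define Pr where "Pr = (\<lambda>i. proto phi alpha lam n te (Suc i))"
  define k where "k = (\<lambda>i. Suc i * ((n - te) * lam))"
  define c where "c = (\<lambda>i. Suc i * n * lam)"
  have Kpos: "(n - te) * lam > 0" using assms(2) lam by simp
  have fam: "is_PPMT_family n te lam Pr k c"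
    unfolding is_PPMT_family_def
  proof (intro conjI allI)
    fix i show "is_PMT n te lam (Pr i) (k i) (c i) 0 0"
      unfolding Pr_def k_def c_def by (rule is_PMT_proto)
  next
    fix i show "k i < k (Suc i)" unfolding k_def using Kpos by simp
  qed
  have each: "real (k i) / real (c i) = 1 - real te / real n" for i
  proof -
    have d: "real (n - te) = real n - real te" using assms(2) by (simp add: of_nat_diff)
    have "real (k i) = real (Suc i) * real (n - te) * real lam"
      unfolding k_def by (simp only: of_nat_mult mult.assoc)
    then have "real (k i) = real (Suc i) * (real n - real te) * real lam" by (simp only: d)
    moreover have "real (c i) = real (Suc i) * real n * real lam" unfolding c_def by (simp only: of_nat_mult)
    ultimately have "real (k i) / real (c i) =
        (real (Suc i) * real lam * (real n - real te)) / (real (Suc i) * real lam * real n)"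
      by (simp only: mult_ac)
    also have "\<dots> = (real n - real te) / real n"
      using lam by (intro mult_divide_mult_cancel_left) simp
    also have "\<dots> = 1 - real te / real n"
      using assms(1) by (simp add: diff_divide_distrib)
    finally show ?thesis .
  qed
  have "P_secrecy_rate k c = 1 - real te / real n"
    unfolding P_secrecy_rate_def each by simp
  then show ?thesis using fam by blast
qed

end
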